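(* Assume the bounded-feature assumption: there is $\Phi>0$ with $\|\phi_{y,x}\|\le\Phi$ for all inputs $x$ and outputs $y$. Consider the alternating procedure (ALRIGHT) described in the context, run for $T$ iterations with constant step size $\alpha_t=\alpha_0/\sqrt{T}$ for all $t\in\{1,\dots,T\}$, where $\alpha_0>0$. Then for any $\lambda\in[0,1]$ its output $\hat\theta_{\mathrm{AL}}=\theta_T$ satisfies $$\mathbb{E}\Big[\lambda f_{\mathrm{DPO}}(\hat\theta_{\mathrm{AL}})+(1-\lambda)f_{\mathrm{SFT}}(\hat\theta_{\mathrm{AL}})-\min_{\theta\in\Theta}\big(\lambda f_{\mathrm{DPO}}(\theta)+(1-\lambda)f_{\mathrm{SFT}}(\theta)\big)\Big]=\mathcal{O}\Big(\frac{\log T}{\sqrt T}\Big),$$ where the expectation is over the randomness of the procedure.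
   Context: Parameter set $\Theta\subseteq\mathbb{R}^d$ is a nonempty closed convex set on which the minimum above is attained, and $\Pi_\Theta$ is Euclidean projection onto it. Policy model: for a finite output set $\mathcal{Y}$, $\pi_\theta(y\mid x)=\exp(\theta^\top\phi_{y,x})/\sum_{y'\in\mathcal{Y}}\exp(\theta^\top\phi_{y',x})$ with feature vectors $\phi_{y,x}\in\mathbb{R}^d$; the reference policy is $\pi_{\mathrm{ref}}=\pi_{\theta_{\mathrm{ref}}}$ for a fixed $\theta_{\mathrm{ref}}$. Datasets: $\mathcal{D}_{\mathrm{DPO}}=\{(x^{(i)},y_w^{(i)},y_\ell^{(i)})\}_{i=1}^{N_1}$ (input, preferred, dispreferred response) and $\mathcal{D}_{\mathrm{SFT}}=\{(x^{(i)},y^{(i)})\}_{i=1}^{N_2}$. With $\sigma$ the sigmoid and $\beta>0$, $h_\beta(\theta;x,y_w,y_\ell)=\beta\log\frac{\pi_\theta(y_w|x)}{\pi_{\mathrm{ref}}(y_w|x)}-\beta\log\frac{\pi_\theta(y_\ell|x)}{\pi_{\mathrm{ref}}(y_\ell|x)}$, $f_{\mathrm{DPO}}(\theta)=-\frac1{N_1}\sum_{\mathcal{D}_{\mathrm{DPO}}}\log\sigma(h_\beta(\theta;x,y_w,y_\ell))$, $f_{\mathrm{SFT}}(\theta)=-\frac1{N_2}\sum_{\mathcal{D}_{\mathrm{SFT}}}\log\pi_\theta(y|x)$, $g_{\mathrm{DPO}}(\theta;x,y_w,y_\ell)=-(1-\sigma(h_\beta))\nabla_\theta h_\beta(\theta;x,y_w,y_\ell)$,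 $g_{\mathrm{SFT}}(\theta;x,y)=-\nabla_\theta\pi_\theta(y|x)/\pi_\theta(y|x)$. ALRIGHT (inputs: datasets, step sizes $\{\alpha_t\}$, $\lambda\in[0,1]$, initialization $\theta_1\in\Theta$): for $t=1,\dots,T-1$, sample $i_t\sim\mathrm{Bernoulli}(\lambda)$; if $i_t=1$, sample $(x^t,y_w^t,y_\ell^t)$ uniformly from $\mathcal{D}_{\mathrm{DPO}}$ and set $\theta_{t+1}=\Pi_\Theta(\theta_t-\alpha_tg_{\mathrm{DPO}}(\theta_t;x^t,y_w^t,y_\ell^t))$; otherwise sample $(x^t,y^t)$ uniformly from $\mathcal{D}_{\mathrm{SFT}}$ and set $\theta_{t+1}=\Pi_\Theta(\theta_t-\alpha_tg_{\mathrm{SFT}}(\theta_t;x^t,y^t))$. Output $\theta_T$. *)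

theory Defs
  imports "HOL-Analysis.Analysis" "HOL-Probability.Probability" "HOL-Library.Landau_Symbols"
begin

definition grad :: "('a::euclidean_space \<Rightarrow> real) \<Rightarrow> 'a \<Rightarrow> 'a" where
  "grad f \<theta> = (THE g. (f has_derivative (\<lambda>h. g \<bullet> h)) (at \<theta>))"

definition sigmoid :: "real \<Rightarrow> real" where
  "sigmoid z = 1 / (1 + exp (- z))"

definition policy :: "('y::finite \<Rightarrow> 'x \<Rightarrow> 'a::euclidean_space) \<Rightarrow> 'a \<Rightarrow> 'y \<Rightarrow> 'x \<Rightarrow> real" where
  "policy \<phi> \<theta> y x = exp (\<theta> \<bullet> \<phi> y x) / (\<Sum>y'\<in>UNIV. exp (\<theta> \<bullet> \<phi> y' x))"

definition h_beta :: "('y::finite \<Rightarrow> 'x \<Rightarrow> 'a::euclidean_space) \<Rightarrow> 'a \<Rightarrow> real \<Rightarrow> 'a \<Rightarrow> 'x \<Rightarrow> 'y \<Rightarrow> 'y \<Rightarrow> real" where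
  "h_beta \<phi> \<theta>ref \<beta> \<theta> x yw yl =
     \<beta> * ln (policy \<phi> \<theta> yw x / policy \<phi> \<theta>ref yw x)
   - \<beta> * ln (policy \<phi> \<theta> yl x / policy \<phi> \<theta>ref yl x)"

definition f_DPO :: "('y::finite \<Rightarrow> 'x \<Rightarrow> 'a::euclidean_space) \<Rightarrow> 'a \<Rightarrow> real \<Rightarrow> ('x \<times> 'y \<times> 'y) list \<Rightarrow> 'a \<Rightarrow> real" where
  "f_DPO \<phi> \<theta>ref \<beta> D \<theta> =
     - (1 / real (length D)) * (\<Sum>i<length D. case D ! i of (x, yw, yl) \<Rightarrow>
          ln (sigmoid (h_beta \<phi> \<theta>ref \<beta> \<theta> x yw yl)))"

definition f_SFT :: "('y::finite \<Rightarrow> 'x \<Rightarrow> 'a::euclidean_space) \<Rightarrow> ('x \<times> 'y) list \<Rightarrow> 'a \<Rightarrow> real" where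
  "f_SFT \<phi> D \<theta> =
     - (1 / real (length D)) * (\<Sum>i<length D. case D ! i of (x, y) \<Rightarrow> ln (policy \<phi> \<theta> y x))"

definition g_DPO :: "('y::finite \<Rightarrow> 'x \<Rightarrow> 'a::euclidean_space) \<Rightarrow> 'a \<Rightarrow> real \<Rightarrow> 'a \<Rightarrow> 'x \<Rightarrow> 'y \<Rightarrow> 'y \<Rightarrow> 'a" where
  "g_DPO \<phi> \<theta>ref \<beta> \<theta> x yw yl =
     - ((1 - sigmoid (h_beta \<phi> \<theta>ref \<beta> \<theta> x yw yl))
          *\<^sub>R grad (\<lambda>t. h_beta \<phi> \<theta>ref \<beta> t x yw yl) \<theta>)"

definition g_SFT :: "('y::finite \<Rightarrow> 'x \<Rightarrow> 'a::euclidean_space) \<Rightarrow> 'a \<Rightarrow> 'x \<Rightarrow> 'y \<Rightarrow> 'a" where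
  "g_SFT \<phi> \<theta> x y = - ((1 / policy \<phi> \<theta> y x) *\<^sub>R grad (\<lambda>t. policy \<phi> t y x) \<theta>)"

definition alright_step ::
  "('y::finite \<Rightarrow> 'x \<Rightarrow> 'a::euclidean_space) \<Rightarrow> 'a \<Rightarrow> real \<Rightarrow> 'a set
   \<Rightarrow> ('x \<times> 'y \<times> 'y) list \<Rightarrow> ('x \<times> 'y) list \<Rightarrow> real \<Rightarrow> real \<Rightarrow> 'a \<Rightarrow> 'a pmf" where
  "alright_step \<phi> \<theta>ref \<beta> \<Theta> D1 D2 lam \<alpha> \<theta> =
     bind_pmf (bernoulli_pmf lam) (\<lambda>i.
       if i then
         map_pmf (\<lambda>k. case D1 ! k of (x, yw, yl) \<Rightarrow>
                        closest_point \<Theta> (\<theta> - \<alpha> *\<^sub>R g_DPO \<phi> \<theta>ref \<beta> \<theta> x yw yl))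
                 (pmf_of_set {..<length D1})
       else
         map_pmf (\<lambda>k. case D2 ! k of (x, y) \<Rightarrow>
                        closest_point \<Theta> (\<theta> - \<alpha> *\<^sub>R g_SFT \<phi> \<theta> x y))
                 (pmf_of_set {..<length D2}))"

fun alright_iter ::
  "('y::finite \<Rightarrow> 'x \<Rightarrow> 'a::euclidean_space) \<Rightarrow> 'a \<Rightarrow> real \<Rightarrow> 'a set
   \<Rightarrow> ('x \<times> 'y \<times> 'y) list \<Rightarrow> ('x \<times> 'y) list \<Rightarrow> real \<Rightarrow> real \<Rightarrow> nat \<Rightarrow> 'a \<Rightarrow> 'a pmf" where
  "alright_iter \<phi> \<theta>ref \<beta> \<Theta> D1 D2 lam \<alpha> 0 \<theta> = return_pmf \<theta>"
| "alright_iter \<phi> \<theta>ref \<beta> \<Theta> D1 D2 lam \<alpha> (Suc n) \<theta> =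
     bind_pmf (alright_step \<phi> \<theta>ref \<beta> \<Theta> D1 D2 lam \<alpha> \<theta>)
              (alright_iter \<phi> \<theta>ref \<beta> \<Theta> D1 D2 lam \<alpha> n)"

text \<open>Output theta_T of ALRIGHT run with T iterations (t = 1..T-1 updates),
  constant step size alpha_t = alpha0 / sqrt T, starting from theta1.\<close>
definition alright_output ::
  "('y::finite \<Rightarrow> 'x \<Rightarrow> 'a::euclidean_space) \<Rightarrow> 'a \<Rightarrow> real \<Rightarrow> 'a set
   \<Rightarrow> ('x \<times> 'y \<times> 'y) list \<Rightarrow> ('x \<times> 'y) list \<Rightarrow> real \<Rightarrow> real \<Rightarrow> 'a \<Rightarrow> nat \<Rightarrow> 'a pmf" where
  "alright_output \<phi> \<theta>ref \<beta> \<Theta> D1 D2 lam \<alpha>0 \<theta>1 T =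
     alright_iter \<phi> \<theta>ref \<beta> \<Theta> D1 D2 lam (\<alpha>0 / sqrt (real T)) (T - 1) \<theta>1"

end

theory Submission
  imports Defs
begin


lemma grad_eq:
  assumes "(f has_derivative (\<lambda>h. g \<bullet> h)) (at \<theta>)"
  shows "grad f \<theta> = g"
  unfolding grad_def
proof (rule the_equality)
  show "(f has_derivative (\<lambda>h. g \<bullet> h)) (at \<theta>)" by fact
  fix g' assume "(f has_derivative (\<lambda>h. g' \<bullet> h)) (at \<theta>)"
  from has_derivative_unique[OF this assms] have "(\<lambda>h. g' \<bullet> h) = (\<lambda>h. g \<bullet> h)" .
  then have "g' \<bullet> (g' - g) = g \<bullet> (g' - g)" by meson
  then have "(g' - g) \<bullet> (g' - g) = 0" by (simp add: inner_diff_left)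
  then show "g' = g" by simp
qed

definition Zf :: "('y::finite \<Rightarrow> 'x \<Rightarrow> 'a::euclidean_space) \<Rightarrow> 'a \<Rightarrow> 'x \<Rightarrow> real" where
  "Zf \<phi> \<theta> x = (\<Sum>y'\<in>UNIV. exp (\<theta> \<bullet> \<phi> y' x))"

lemma Zf_pos: "Zf \<phi> \<theta> x > 0"
  unfolding Zf_def by (intro sum_pos) auto

lemma policy_pos: "policy \<phi> \<theta> y x > 0"
  unfolding policy_def using Zf_pos[of \<phi> \<theta> x] by (simp add: Zf_def)

lemma ln_policy: "ln (policy \<phi> \<theta> y x) = \<theta> \<bullet> \<phi> y x - ln (Zf \<phi> \<theta> x)"
  unfolding policy_def Zf_def[symmetric] using Zf_pos[of \<phi> \<theta> x]
  by (simp add: ln_div)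

lemma h_beta_eq: "h_beta \<phi> \<theta>ref \<beta> \<theta> x yw yl = \<beta> * ((\<theta> - \<theta>ref) \<bullet> (\<phi> yw x - \<phi> yl x))"
proof -
  have l: "ln (policy \<phi> a y x / policy \<phi> b y x) = (a - b) \<bullet> \<phi> y x - ln (Zf \<phi> a x) + ln (Zf \<phi> b x)" for a b y
    using policy_pos[of \<phi> a y x] policy_pos[of \<phi> b y x]
    by (simp add: ln_div ln_policy inner_diff_left)
  show ?thesis unfolding h_beta_def l by (simp add: inner_diff_right algebra_simps)
qed

lemma grad_h_beta: "grad (\<lambda>t. h_beta \<phi> \<theta>ref \<beta> t x yw yl) \<theta> = \<beta> *\<^sub>R (\<phi> yw x - \<phi> yl x)"
proof (rule grad_eq)
  have "((\<lambda>t. \<beta> * ((t - \<theta>ref) \<bullet> (\<phi> yw x - \<phi> yl x))) has_derivative (\<lambda>h. (\<beta> *\<^sub>R (\<phi> yw x - \<phi> yl x)) \<bullet> h)) (at \<theta>)"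
    by (auto intro!: derivative_eq_intros simp: inner_commute)
  then show "((\<lambda>t. h_beta \<phi> \<theta>ref \<beta> t x yw yl) has_derivative (\<lambda>h. (\<beta> *\<^sub>R (\<phi> yw x - \<phi> yl x)) \<bullet> h)) (at \<theta>)"
    by (simp add: h_beta_eq)
qed

definition mf :: "('y::finite \<Rightarrow> 'x \<Rightarrow> 'a::euclidean_space) \<Rightarrow> 'a \<Rightarrow> 'x \<Rightarrow> 'a" where
  "mf \<phi> \<theta> x = (\<Sum>y'\<in>UNIV. policy \<phi> \<theta> y' x *\<^sub>R \<phi> y' x)"

lemma grad_policy: "grad (\<lambda>t. policy \<phi> t y x) \<theta> = policy \<phi> \<theta> y x *\<^sub>R (\<phi> y x - mf \<phi> \<theta> x)"
proof (rule grad_eq)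
  let ?E = "\<lambda>t. exp (t \<bullet> \<phi> y x)"
  let ?Z = "\<lambda>t. (\<Sum>y'\<in>UNIV. exp (t \<bullet> \<phi> y' x))"
  have dE: "(?E has_derivative (\<lambda>h. ?E \<theta> * (h \<bullet> \<phi> y x))) (at \<theta>)"
    by (auto intro!: derivative_eq_intros)
  have dZ: "(?Z has_derivative (\<lambda>h. (\<Sum>y'\<in>UNIV. exp (\<theta> \<bullet> \<phi> y' x) * (h \<bullet> \<phi> y' x)))) (at \<theta>)"
    by (auto intro!: derivative_eq_intros simp: mult.commute)
  have d: "((\<lambda>t. ?E t / ?Z t) has_derivative
     (\<lambda>h. - ?E \<theta> * (inverse (?Z \<theta>) * (\<Sum>y'\<in>UNIV. exp (\<theta> \<bullet> \<phi> y' x) * (h \<bullet> \<phi> y' x)) * inverse (?Z \<theta>))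
        + ?E \<theta> * (h \<bullet> \<phi> y x) / ?Z \<theta>)) (at \<theta>)"
    using Zf_pos[of \<phi> \<theta> x] has_derivative_divide[OF dE dZ]
    by (simp add: Zf_def)
  have eq: "(\<lambda>h. - ?E \<theta> * (inverse (?Z \<theta>) * (\<Sum>y'\<in>UNIV. exp (\<theta> \<bullet> \<phi> y' x) * (h \<bullet> \<phi> y' x)) * inverse (?Z \<theta>))
        + ?E \<theta> * (h \<bullet> \<phi> y x) / ?Z \<theta>) = (\<lambda>h. (policy \<phi> \<theta> y x *\<^sub>R (\<phi> y x - mf \<phi> \<theta> x)) \<bullet> h)"
  proof
    fix h
    have "mf \<phi> \<theta> x \<bullet> h = (\<Sum>y'\<in>UNIV. exp (\<theta> \<bullet> \<phi> y' x) * (h \<bullet> \<phi> y' x)) / ?Z \<theta>"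
      unfolding mf_def policy_def inner_sum_left sum_divide_distrib
      by (intro sum.cong) (auto simp: inner_commute)
    moreover have "(policy \<phi> \<theta> y x *\<^sub>R (\<phi> y x - mf \<phi> \<theta> x)) \<bullet> h
       = policy \<phi> \<theta> y x * (h \<bullet> \<phi> y x) - policy \<phi> \<theta> y x * (mf \<phi> \<theta> x \<bullet> h)"
      by (simp add: inner_diff_left inner_commute algebra_simps)
    moreover have "?Z \<theta> > 0" using Zf_pos[of \<phi> \<theta> x] by (simp add: Zf_def)
    moreover have "policy \<phi> \<theta> y x = ?E \<theta> / ?Z \<theta>" unfolding policy_def ..
    ultimately show "- ?E \<theta> * (inverse (?Z \<theta>) * (\<Sum>y'\<in>UNIV. exp (\<theta> \<bullet> \<phi> y' x) * (h \<bullet> \<phi> y' x)) * inverse (?Z \<theta>))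
        + ?E \<theta> * (h \<bullet> \<phi> y x) / ?Z \<theta> = (policy \<phi> \<theta> y x *\<^sub>R (\<phi> y x - mf \<phi> \<theta> x)) \<bullet> h"
      by (simp only:) (simp add: field_simps)
  qed
  show "((\<lambda>t. policy \<phi> t y x) has_derivative (\<lambda>h. (policy \<phi> \<theta> y x *\<^sub>R (\<phi> y x - mf \<phi> \<theta> x)) \<bullet> h)) (at \<theta>)"
    using d unfolding eq policy_def .
qed

lemma g_SFT_eq: "g_SFT \<phi> \<theta> x y = mf \<phi> \<theta> x - \<phi> y x"
  unfolding g_SFT_def grad_policy using policy_pos[of \<phi> \<theta> y x] by simp

lemma g_DPO_eq: "g_DPO \<phi> \<theta>ref \<beta> \<theta> x yw yl =
   - ((1 - sigmoid (h_beta \<phi> \<theta>ref \<beta> \<theta> x yw yl)) *\<^sub>R (\<beta> *\<^sub>R (\<phi> yw x - \<phi> yl x)))"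
  unfolding g_DPO_def grad_h_beta ..

lemma exp_ge_tangent: "exp m * (1 + t - m) \<le> exp (t::real)"
proof -
  have "1 + (t - m) \<le> exp (t - m)" by (rule exp_ge_add_one_self)
  then have "exp m * (1 + (t - m)) \<le> exp m * exp (t - m)" by (intro mult_left_mono) auto
  then show ?thesis by (simp add: exp_diff add_diff_eq)
qed

lemma exp_jensen:
  assumes "finite A" "\<And>i. i \<in> A \<Longrightarrow> p i \<ge> 0" "(\<Sum>i\<in>A. p i) = 1"
  shows "exp (\<Sum>i\<in>A. p i * t i) \<le> (\<Sum>i\<in>A. p i * exp (t i :: real))"
proof -
  define M where "M = (\<Sum>i\<in>A. p i * t i)"
  have "(\<Sum>i\<in>A. p i * (exp M * (1 + t i - M))) \<le> (\<Sum>i\<in>A. p i * exp (t i))"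
    by (intro sum_mono mult_left_mono exp_ge_tangent assms(2))
  moreover have "(\<Sum>i\<in>A. p i * (exp M * (1 + t i - M))) = exp M * ((\<Sum>i\<in>A. p i) + (\<Sum>i\<in>A. p i * t i) - M * (\<Sum>i\<in>A. p i))"
    by (simp add: sum_distrib_left sum_distrib_right sum.distrib sum_subtractf algebra_simps)
  ultimately show ?thesis using assms(3) by (simp add: M_def)
qed

lemma two_point:
  assumes "p \<ge> 0" "q \<ge> 0" "p + q = 1"
  shows "exp (q * s) \<le> p + q * exp (s::real)"
proof -
  have "exp (q * s) * (1 + (0::real) - q * s) \<le> exp 0" by (rule exp_ge_tangent)
  moreover have "exp (q * s) * (1 + s - q * s) \<le> exp s" by (rule exp_ge_tangent)
  ultimately have "p * (exp (q * s) * (1 + (0::real) - q * s)) + q * (exp (q * s) * (1 + s - q * s)) \<le> p * 1 + q * exp s"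
    using assms by (intro add_mono mult_left_mono) auto
  moreover have "p * (exp (q * s) * (1 + (0::real) - q * s)) + q * (exp (q * s) * (1 + s - q * s)) = exp (q * s) * ((p + q) - q * s*(p+q) + q * s)"
    by (simp add: algebra_simps)
  ultimately show ?thesis using assms(3) by simp
qed

lemma sigmoid_pos: "sigmoid z > 0" unfolding sigmoid_def by (simp add: add_pos_pos)
lemma sigmoid_lt1: "sigmoid z < 1"
proof -
  have "1 < 1 + exp (- z)" by simp
  moreover have "0 < 1 + exp (- z)" by (simp add: add_pos_pos)
  ultimately show ?thesis unfolding sigmoid_def by (simp add: divide_less_eq)
qed

lemma ln_sigmoid_concave: "ln (sigmoid z') \<le> ln (sigmoid z) + (1 - sigmoid z) * (z' - z)"
proof -
  define p where "p = 1 / (1 + exp (- z))"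
  define q where "q = exp (- z) / (1 + exp (- z))"
  have e: "1 + exp (- z) > 0" by (simp add: add_pos_pos)
  have pq: "p \<ge> 0" "q \<ge> 0" "p + q = 1" unfolding p_def q_def using e
    by (auto simp: add_divide_distrib[symmetric])
  have "exp (q * (z - z')) \<le> p + q * exp (z - z')" by (rule two_point[OF pq])
  also have "p + q * exp (z - z') = (1 + exp (- z) * exp (z - z')) / (1 + exp (- z))"
    unfolding p_def q_def by (simp add: add_divide_distrib)
  also have "exp (- z) * exp (z - z') = exp (- z')" by (simp add: exp_add[symmetric])
  finally have "q * (z - z') \<le> ln ((1 + exp (- z')) / (1 + exp (- z)))"
    by (simp add: ln_ge_iff add_pos_pos)
  also have "\<dots> = ln (sigmoid z) - ln (sigmoid z')"
    unfolding sigmoid_def using e add_pos_pos[of 1 "exp (- z')"] by (simp add: ln_div)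
  finally have "q * (z - z') \<le> ln (sigmoid z) - ln (sigmoid z')" .
  moreover have "q = 1 - sigmoid z" using pq(3) unfolding p_def sigmoid_def by simp
  ultimately show ?thesis by (simp add: algebra_simps)
qed

lemma DPO_sample_ineq:
  "- ln (sigmoid (h_beta \<phi> \<theta>ref \<beta> \<theta> x yw yl)) - (- ln (sigmoid (h_beta \<phi> \<theta>ref \<beta> u x yw yl)))
     \<le> g_DPO \<phi> \<theta>ref \<beta> \<theta> x yw yl \<bullet> (\<theta> - u)"
proof -
  define c where "c = \<phi> yw x - \<phi> yl x"
  define z where "z = \<beta> * ((\<theta> - \<theta>ref) \<bullet> c)"
  define z' where "z' = \<beta> * ((u - \<theta>ref) \<bullet> c)"
  have "g_DPO \<phi> \<theta>ref \<beta> \<theta> x yw yl \<bullet> (\<theta> - u) = (1 - sigmoid z) * (z' - z)"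
    unfolding g_DPO_eq h_beta_eq c_def[symmetric] z_def[symmetric] z'_def
    by (simp add: z_def inner_diff_left inner_diff_right inner_commute algebra_simps)
  moreover have "ln (sigmoid z') \<le> ln (sigmoid z) + (1 - sigmoid z) * (z' - z)" by (rule ln_sigmoid_concave)
  ultimately show ?thesis unfolding h_beta_eq c_def[symmetric] z_def[symmetric] z'_def[symmetric] by simp
qed

lemma sum_policy: "(\<Sum>y\<in>UNIV. policy \<phi> \<theta> y x) = 1"
  unfolding policy_def sum_divide_distrib[symmetric] using Zf_pos[of \<phi> \<theta> x] by (simp add: Zf_def)

lemma SFT_sample_ineq:
  "- ln (policy \<phi> \<theta> y x) - (- ln (policy \<phi> u y x)) \<le> g_SFT \<phi> \<theta> x y \<bullet> (\<theta> - u)"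
proof -
  let ?p = "\<lambda>y'. policy \<phi> \<theta> y' x"
  have "exp (\<Sum>y'\<in>UNIV. ?p y' * ((u - \<theta>) \<bullet> \<phi> y' x)) \<le> (\<Sum>y'\<in>UNIV. ?p y' * exp ((u - \<theta>) \<bullet> \<phi> y' x))"
    by (intro exp_jensen sum_policy) (auto intro: less_imp_le policy_pos)
  also have "\<dots> = Zf \<phi> u x / Zf \<phi> \<theta> x"
    unfolding Zf_def sum_divide_distrib policy_def
    by (intro sum.cong) (auto simp: inner_diff_left exp_diff)
  also have "(\<Sum>y'\<in>UNIV. ?p y' * ((u - \<theta>) \<bullet> \<phi> y' x)) = mf \<phi> \<theta> x \<bullet> (u - \<theta>)"
    unfolding mf_def inner_sum_left by (simp add: inner_commute)
  finally have "mf \<phi> \<theta> x \<bullet> (u - \<theta>) \<le> ln (Zf \<phi> u x) - ln (Zf \<phi> \<theta> x)"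
    using Zf_pos[of \<phi> u x] Zf_pos[of \<phi> \<theta> x] by (simp add: ln_ge_iff[symmetric] ln_div)
  then show ?thesis
    unfolding g_SFT_eq ln_policy
    by (simp add: inner_diff_left inner_diff_right inner_commute algebra_simps)
qed

lemma norm_mf: assumes "\<forall>x y. norm (\<phi> y x) \<le> \<Phi>" shows "norm (mf \<phi> \<theta> x) \<le> \<Phi>"
proof -
  have "norm (mf \<phi> \<theta> x) \<le> (\<Sum>y'\<in>UNIV. norm (policy \<phi> \<theta> y' x *\<^sub>R \<phi> y' x))"
    unfolding mf_def by (rule norm_sum)
  also have "\<dots> \<le> (\<Sum>y'\<in>UNIV. policy \<phi> \<theta> y' x * \<Phi>)"
    using assms policy_pos[of \<phi> \<theta> _ x] by (intro sum_mono) (auto intro: mult_left_mono less_imp_le simp: abs_of_pos)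
  also have "\<dots> = \<Phi>" by (simp add: sum_distrib_right[symmetric] sum_policy)
  finally show ?thesis .
qed

lemma norm_g_SFT: assumes "\<forall>x y. norm (\<phi> y x) \<le> \<Phi>" shows "norm (g_SFT \<phi> \<theta> x y) \<le> 2 * \<Phi>"
proof -
  have "norm (g_SFT \<phi> \<theta> x y) \<le> norm (mf \<phi> \<theta> x) + norm (\<phi> y x)"
    unfolding g_SFT_eq by (rule norm_triangle_ineq4)
  then show ?thesis using norm_mf[OF assms, of \<theta> x] assms[rule_format, of y x] by linarith
qed

lemma norm_g_DPO: assumes "\<forall>x y. norm (\<phi> y x) \<le> \<Phi>" "\<beta> > 0"
  shows "norm (g_DPO \<phi> \<theta>ref \<beta> \<theta> x yw yl) \<le> 2 * \<beta> * \<Phi>"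
proof -
  define s where "s = sigmoid (h_beta \<phi> \<theta>ref \<beta> \<theta> x yw yl)"
  have s: "0 < s" "s < 1" unfolding s_def by (auto simp: sigmoid_pos sigmoid_lt1)
  have "norm (\<phi> yw x - \<phi> yl x) \<le> 2 * \<Phi>"
    using norm_triangle_ineq4[of "\<phi> yw x" "\<phi> yl x"] assms(1)[rule_format, of yw x] assms(1)[rule_format, of yl x] by linarith
  then have "norm (g_DPO \<phi> \<theta>ref \<beta> \<theta> x yw yl) = (1 - s) * (\<beta> * norm (\<phi> yw x - \<phi> yl x))"
    unfolding g_DPO_eq s_def[symmetric] using s assms(2) by simp
  also have "\<dots> \<le> 1 * (\<beta> * (2 * \<Phi>))"
    using s assms(2) \<open>norm (\<phi> yw x - \<phi> yl x) \<le> 2 * \<Phi>\<close>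
    by (intro mult_mono) auto
  finally show ?thesis by simp
qed



lemma last_iter_comb:
  fixes v :: "nat \<Rightarrow> real"
  assumes C: "\<And>s m. (\<Sum>i<m. v (s + i) - v s) \<le> m * c"
  shows "k \<le> N \<Longrightarrow> v N \<le> (\<Sum>i<Suc k. v (N - k + i)) / Suc k + c * harm k"
proof (induction k)
  case 0 then show ?case by (simp add: harm_def)
next
  case (Suc k)
  define s where "s = N - Suc k"
  have Nk: "N - k = Suc s" using Suc.prems unfolding s_def by simp
  define A where "A = (\<Sum>i<Suc k. v (Suc s + i))"
  have IH: "v N \<le> A / Suc k + c * harm k" using Suc.IH Suc.prems unfolding A_def Nk by simp
  have sumeq: "(\<Sum>i<Suc (Suc k). v (s + i)) = v s + A"
    unfolding A_def by (subst sum.lessThan_Suc_shift) simp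
  have "(\<Sum>i<Suc (Suc k). v (s + i) - v s) \<le> Suc (Suc k) * c" by (rule C)
  then have key: "A - (Suc k) * v s \<le> (Suc (Suc k)) * c"
    using sumeq by (simp add: sum_subtractf algebra_simps)
  have "A / Suc k \<le> (v s + A) / Suc (Suc k) + c / Suc k"
  proof -
    have "A / Suc k - (v s + A) / Suc (Suc k) = (A - Suc k * v s) / (real (Suc k) * real (Suc (Suc k)))"
      by (simp add: field_simps)
    also have "\<dots> \<le> (real (Suc (Suc k)) * c) / (real (Suc k) * real (Suc (Suc k)))"
      using key by (intro divide_right_mono) auto
    also have "\<dots> = c / Suc k"
    proof -
      have "\<And>a b. a \<noteq> 0 \<Longrightarrow> (a * c) / (b * a) = c / (b::real)" by simp
      from this[of "real (Suc (Suc k))" "real (Suc k)"] show ?thesis by (simp only: of_nat_eq_0_iff nat.simps(3) not_False_eq_True simp_thms)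
    qed
    finally show ?thesis by simp
  qed
  moreover have "harm (Suc k) = harm k + 1 / Suc k" by (simp add: harm_Suc inverse_eq_divide)
  ultimately have "v N \<le> (v s + A) / Suc (Suc k) + c * harm (Suc k)"
    using IH by (simp add: algebra_simps add_divide_distrib)
  moreover have "N - Suc k = s" unfolding s_def ..
  ultimately show ?case using sumeq by simp
qed

lemma harm_le_ln: "n \<ge> 1 \<Longrightarrow> harm n \<le> 1 + ln (real n)"
proof (induction n rule: dec_induct)
  case base then show ?case by (simp add: harm_def)
next
  case (step n)
  have n: "real n \<ge> 1" using step.hyps by simp
  have "ln (real n / (real n + 1)) \<le> real n / (real n + 1) - 1"
    using n by (intro ln_le_minus_one) auto
  also have "\<dots> = - (1 / (real n + 1))" using n by (simp add: field_simps)
  finally have "1 / (real n + 1) \<le> ln (real n + 1) - ln (real n)"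
    using n by (simp add: ln_div)
  then show ?case using step.IH by (simp add: harm_Suc inverse_eq_divide add_ac)
qed



lemma expectation_bind_finite:
  fixes h :: "'b \<Rightarrow> real"
  assumes "finite (set_pmf p)" "\<And>x. x \<in> set_pmf p \<Longrightarrow> finite (set_pmf (f x))"
  shows "measure_pmf.expectation (bind_pmf p f) h = measure_pmf.expectation p (\<lambda>x. measure_pmf.expectation (f x) h)"
proof -
  have "measure_pmf.expectation (bind_pmf p f) h = (\<Sum>a\<in>set_pmf p. pmf p a *\<^sub>R measure_pmf.expectation (f a) h)"
    using assms by (intro pmf_expectation_bind) auto
  also have "\<dots> = measure_pmf.expectation p (\<lambda>x. measure_pmf.expectation (f x) h)"
    using assms by (intro integral_measure_pmf[symmetric]) auto
  finally show ?thesis .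
qed

context
  fixes \<phi> :: "'y::finite \<Rightarrow> 'x \<Rightarrow> 'a::euclidean_space"
    and \<theta>ref :: 'a and \<Theta> :: "'a set"
    and D1 :: "('x \<times> 'y \<times> 'y) list" and D2 :: "('x \<times> 'y) list"
    and \<beta> lam \<eta> :: real
  assumes Th: "\<Theta> \<noteq> {}" "closed \<Theta>" "convex \<Theta>"
    and D: "D1 \<noteq> []" "D2 \<noteq> []"
    and lam: "0 \<le> lam" "lam \<le> 1"
  fixes G :: real
  assumes eta: "\<eta> \<ge> 0"
    and GD: "\<And>\<theta> x yw yl. norm (g_DPO \<phi> \<theta>ref \<beta> \<theta> x yw yl) \<le> G"
    and GS: "\<And>\<theta> x y. norm (g_SFT \<phi> \<theta> x y) \<le> G"
begin

definition "zD \<theta> k = (case D1 ! k of (x, yw, yl) \<Rightarrow>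
                        closest_point \<Theta> (\<theta> - \<eta> *\<^sub>R g_DPO \<phi> \<theta>ref \<beta> \<theta> x yw yl))"
definition "zS \<theta> k = (case D2 ! k of (x, y) \<Rightarrow>
                        closest_point \<Theta> (\<theta> - \<eta> *\<^sub>R g_SFT \<phi> \<theta> x y))"

lemma ne: "{..<length D1} \<noteq> {}" "{..<length D2} \<noteq> {}" using D by auto

lemma sps: "set_pmf (pmf_of_set {..<length D1}) = {..<length D1}" "set_pmf (pmf_of_set {..<length D2}) = {..<length D2}"
  using ne by (auto intro!: set_pmf_of_set)

abbreviation "K \<equiv> alright_step \<phi> \<theta>ref \<beta> \<Theta> D1 D2 lam \<eta>"
abbreviation "It \<equiv> alright_iter \<phi> \<theta>ref \<beta> \<Theta> D1 D2 lam \<eta>"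

lemma K_eq: "K \<theta> = bind_pmf (bernoulli_pmf lam) (\<lambda>i. if i then map_pmf (zD \<theta>) (pmf_of_set {..<length D1})
     else map_pmf (zS \<theta>) (pmf_of_set {..<length D2}))"
  unfolding alright_step_def zD_def zS_def ..

lemma set_K: "finite (set_pmf (K \<theta>))" "set_pmf (K \<theta>) \<subseteq> \<Theta>"
proof -
  have "set_pmf (K \<theta>) \<subseteq> zD \<theta> ` {..<length D1} \<union> zS \<theta> ` {..<length D2}"
    unfolding K_eq by (auto simp: sps split: if_splits)
  moreover have "zD \<theta> k \<in> \<Theta>" for k
    unfolding zD_def using closest_point_in_set[OF Th(2,1)] by (auto split: prod.splits)
  moreover have "zS \<theta> k \<in> \<Theta>" for k
    unfolding zS_def using closest_point_in_set[OF Th(2,1)] by (auto split: prod.splits)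
  ultimately show "finite (set_pmf (K \<theta>))" "set_pmf (K \<theta>) \<subseteq> \<Theta>"
    by (auto intro: finite_subset)
qed

lemma set_It: "finite (set_pmf (It n \<theta>))" "\<theta> \<in> \<Theta> \<Longrightarrow> set_pmf (It n \<theta>) \<subseteq> \<Theta>"
proof (induction n arbitrary: \<theta>)
  case 0
  { case 1 show ?case by simp }
  { case 2 then show ?case by simp }
next
  case (Suc n)
  { case 1 show ?case using Suc.IH(1) set_K(1)[of \<theta>] by simp }
  { case 2 show ?case using Suc.IH(2) set_K(2)[of \<theta>] by fastforce }
qed

lemma It_add: "It (m + n) \<theta> = bind_pmf (It m \<theta>) (It n)"
proof (induction m arbitrary: \<theta>)
  case 0 then show ?case by (simp add: bind_return_pmf)
next
  case (Suc m)
  have "It (m + n) = (\<lambda>\<theta>. bind_pmf (It m \<theta>) (It n))" using Suc.IH by auto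
  then show ?case by (simp add: bind_assoc_pmf)
qed

lemma It_Suc': "It (Suc m) \<theta> = bind_pmf (It m \<theta>) K"
proof -
  have "It 0 = return_pmf" by (rule ext) simp
  then have "It (Suc 0) = K" by (intro ext) (simp add: bind_return_pmf')
  then show ?thesis using It_add[of m 1 \<theta>] by simp
qed

lemma E_K: "measure_pmf.expectation (K \<theta>) h =
   lam * ((\<Sum>k<length D1. h (zD \<theta> k)) / length D1) + (1 - lam) * ((\<Sum>k<length D2. h (zS \<theta> k)) / length D2)"
proof -
  have "measure_pmf.expectation (K \<theta>) h = measure_pmf.expectation (bernoulli_pmf lam)
     (\<lambda>i. measure_pmf.expectation (if i then map_pmf (zD \<theta>) (pmf_of_set {..<length D1})
     else map_pmf (zS \<theta>) (pmf_of_set {..<length D2})) h)"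
    unfolding K_eq by (rule expectation_bind_finite) (auto simp: sps)
  also have "\<dots> = lam * ((\<Sum>k<length D1. h (zD \<theta> k)) / length D1) + (1 - lam) * ((\<Sum>k<length D2. h (zS \<theta> k)) / length D2)"
    using lam ne by (simp add: integral_pmf_of_set mult_ac times_divide_eq_right)
  finally show ?thesis .
qed

lemma proj_step:
  assumes u: "u \<in> \<Theta>" and g: "norm g \<le> G" and l: "l1 - l2 \<le> g \<bullet> (\<theta> - u)"
  shows "(norm (closest_point \<Theta> (\<theta> - \<eta> *\<^sub>R g) - u))\<^sup>2 \<le> (norm (\<theta> - u))\<^sup>2 - 2 * \<eta> * (l1 - l2) + \<eta>\<^sup>2 * G\<^sup>2"
proof -
  have "dist (closest_point \<Theta> (\<theta> - \<eta> *\<^sub>R g)) (closest_point \<Theta> u) \<le> dist (\<theta> - \<eta> *\<^sub>R g) u"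
    by (rule closest_point_lipschitz[OF Th(3,2,1)])
  then have "norm (closest_point \<Theta> (\<theta> - \<eta> *\<^sub>R g) - u) \<le> norm ((\<theta> - u) - \<eta> *\<^sub>R g)"
    using closest_point_self[OF u] by (simp add: dist_norm algebra_simps)
  then have "(norm (closest_point \<Theta> (\<theta> - \<eta> *\<^sub>R g) - u))\<^sup>2 \<le> (norm ((\<theta> - u) - \<eta> *\<^sub>R g))\<^sup>2"
    by (intro power_mono) auto
  also have "(norm ((\<theta> - u) - \<eta> *\<^sub>R g))\<^sup>2 = (norm (\<theta> - u))\<^sup>2 - 2 * \<eta> * (g \<bullet> (\<theta> - u)) + \<eta>\<^sup>2 * (norm g)\<^sup>2"
    unfolding power2_norm_eq_inner by (simp add: inner_diff_left inner_diff_right inner_commute algebra_simps power2_eq_square)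
  also have "\<dots> \<le> (norm (\<theta> - u))\<^sup>2 - 2 * \<eta> * (l1 - l2) + \<eta>\<^sup>2 * G\<^sup>2"
  proof -
    have "2 * \<eta> * (l1 - l2) \<le> 2 * \<eta> * (g \<bullet> (\<theta> - u))" using l eta by (intro mult_left_mono) auto
    moreover have "\<eta>\<^sup>2 * (norm g)\<^sup>2 \<le> \<eta>\<^sup>2 * G\<^sup>2" using g by (intro mult_left_mono power_mono) auto
    ultimately show ?thesis by linarith
  qed
  finally show ?thesis .
qed

definition "LD \<theta> k = (case D1 ! k of (x, yw, yl) \<Rightarrow> ln (sigmoid (h_beta \<phi> \<theta>ref \<beta> \<theta> x yw yl)))"
definition "LS \<theta> k = (case D2 ! k of (x, y) \<Rightarrow> ln (policy \<phi> \<theta> y x))"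

lemma fD_eq: "f_DPO \<phi> \<theta>ref \<beta> D1 \<theta> = - (1 / length D1) * (\<Sum>k<length D1. LD \<theta> k)"
  unfolding f_DPO_def LD_def ..
lemma fS_eq: "f_SFT \<phi> D2 \<theta> = - (1 / length D2) * (\<Sum>k<length D2. LS \<theta> k)"
  unfolding f_SFT_def LS_def ..

lemma avg_bound:
  fixes X L :: "'b \<Rightarrow> nat \<Rightarrow> real" and n :: nat and R c :: real
  assumes n: "n > 0" and X: "\<And>k. k < n \<Longrightarrow> X \<theta> k \<le> R + c - 2 * \<eta> * (- L \<theta> k - - L u k)"
  shows "(\<Sum>k<n. X \<theta> k) / n \<le> R + c - 2 * \<eta> * ((- (1 / n) * (\<Sum>k<n. L \<theta> k)) - (- (1 / n) * (\<Sum>k<n. L u k)))"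
proof -
  have "(\<Sum>k<n. X \<theta> k) \<le> (\<Sum>k<n. R + c - 2 * \<eta> * (- L \<theta> k - - L u k))"
    using X by (intro sum_mono) auto
  also have "\<dots> = n * (R + c) + 2 * \<eta> * (\<Sum>k<n. L \<theta> k) - 2 * \<eta> * (\<Sum>k<n. L u k)"
    by (simp add: sum.distrib sum_subtractf sum_distrib_left algebra_simps)
  finally show ?thesis using n by (simp add: field_simps)
qed

definition "F \<theta> = lam * f_DPO \<phi> \<theta>ref \<beta> D1 \<theta> + (1 - lam) * f_SFT \<phi> D2 \<theta>"

lemma one_step:
  assumes u: "u \<in> \<Theta>"
  shows "measure_pmf.expectation (K \<theta>) (\<lambda>z. (norm (z - u))\<^sup>2)
     \<le> (norm (\<theta> - u))\<^sup>2 - 2 * \<eta> * (F \<theta> - F u) + \<eta>\<^sup>2 * G\<^sup>2"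
proof -
  let ?R = "(norm (\<theta> - u))\<^sup>2" and ?c = "\<eta>\<^sup>2 * G\<^sup>2"
  have A: "(\<Sum>k<length D1. (norm (zD \<theta> k - u))\<^sup>2) / length D1 \<le> ?R + ?c - 2 * \<eta> * (f_DPO \<phi> \<theta>ref \<beta> D1 \<theta> - f_DPO \<phi> \<theta>ref \<beta> D1 u)"
    unfolding fD_eq
  proof (rule avg_bound[where X = "\<lambda>\<theta> k. (norm (zD \<theta> k - u))\<^sup>2"])
    show "length D1 > 0" using D by simp
    fix k
    obtain x yw yl where e: "D1 ! k = (x, yw, yl)" by (cases "D1 ! k") auto
    show "(norm (zD \<theta> k - u))\<^sup>2 \<le> ?R + ?c - 2 * \<eta> * (- LD \<theta> k - - LD u k)"
      unfolding zD_def LD_def e using proj_step[OF u GD[of \<theta> x yw yl] DPO_sample_ineq[of \<phi> \<theta>ref \<beta> \<theta> x yw yl u]] by simp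
  qed
  have B: "(\<Sum>k<length D2. (norm (zS \<theta> k - u))\<^sup>2) / length D2 \<le> ?R + ?c - 2 * \<eta> * (f_SFT \<phi> D2 \<theta> - f_SFT \<phi> D2 u)"
    unfolding fS_eq
  proof (rule avg_bound[where X = "\<lambda>\<theta> k. (norm (zS \<theta> k - u))\<^sup>2"])
    show "length D2 > 0" using D by simp
    fix k
    obtain x y where e: "D2 ! k = (x, y)" by (cases "D2 ! k") auto
    show "(norm (zS \<theta> k - u))\<^sup>2 \<le> ?R + ?c - 2 * \<eta> * (- LS \<theta> k - - LS u k)"
      unfolding zS_def LS_def e using proj_step[OF u GS[of \<theta> x y] SFT_sample_ineq[of \<phi> \<theta> y x u]] by simp
  qed
  have "measure_pmf.expectation (K \<theta>) (\<lambda>z. (norm (z - u))\<^sup>2) \<le>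
     lam * (?R + ?c - 2 * \<eta> * (f_DPO \<phi> \<theta>ref \<beta> D1 \<theta> - f_DPO \<phi> \<theta>ref \<beta> D1 u))
     + (1 - lam) * (?R + ?c - 2 * \<eta> * (f_SFT \<phi> D2 \<theta> - f_SFT \<phi> D2 u))"
    unfolding E_K using A B lam by (intro add_mono mult_left_mono) auto
  also have "\<dots> = ?R - 2 * \<eta> * (F \<theta> - F u) + ?c" unfolding F_def by (simp add: algebra_simps)
  finally show ?thesis .
qed

lemma int_It: "integrable (measure_pmf (It m \<theta>)) (f :: 'a \<Rightarrow> real)"
  by (rule integrable_measure_pmf_finite[OF set_It(1)])

lemma E_It_Suc: "measure_pmf.expectation (It (Suc m) \<theta>) (f :: 'a \<Rightarrow> real) =
   measure_pmf.expectation (It m \<theta>) (\<lambda>z. measure_pmf.expectation (K z) f)"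
  unfolding It_Suc' by (rule expectation_bind_finite[OF set_It(1) set_K(1)])

lemma E_It_add: "measure_pmf.expectation (It (m + n) \<theta>) (f :: 'a \<Rightarrow> real) =
   measure_pmf.expectation (It m \<theta>) (\<lambda>z. measure_pmf.expectation (It n z) f)"
  unfolding It_add by (rule expectation_bind_finite[OF set_It(1) set_It(1)])

lemma multi_step:
  assumes u: "u \<in> \<Theta>"
  shows "2 * \<eta> * (\<Sum>i<m. measure_pmf.expectation (It i \<theta>) F - F u)
     + measure_pmf.expectation (It m \<theta>) (\<lambda>z. (norm (z - u))\<^sup>2) \<le> (norm (\<theta> - u))\<^sup>2 + m * (\<eta>\<^sup>2 * G\<^sup>2)"
proof (induction m)
  case 0 then show ?case by simp
next
  case (Suc m)
  let ?N = "\<lambda>z. (norm (z - u))\<^sup>2" and ?c = "\<eta>\<^sup>2 * G\<^sup>2"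
  have "measure_pmf.expectation (It (Suc m) \<theta>) ?N \<le>
      measure_pmf.expectation (It m \<theta>) (\<lambda>z. ?N z - 2 * \<eta> * (F z - F u) + ?c)"
    unfolding E_It_Suc by (intro integral_mono int_It one_step[OF u])
  also have "\<dots> = measure_pmf.expectation (It m \<theta>) ?N - 2 * \<eta> * (measure_pmf.expectation (It m \<theta>) F - F u) + ?c"
    by (simp add: int_It algebra_simps)
  finally show ?case using Suc.IH by (simp add: algebra_simps)
qed

lemma C_bound:
  assumes eta_pos: "\<eta> > 0" and th1: "\<theta>1 \<in> \<Theta>"
  shows "(\<Sum>i<m. measure_pmf.expectation (It (s + i) \<theta>1) F - measure_pmf.expectation (It s \<theta>1) F)
     \<le> m * (\<eta> * G\<^sup>2 / 2)"
proof -
  have pt: "(\<Sum>i<m. measure_pmf.expectation (It i z) F - F z) \<le> m * (\<eta> * G\<^sup>2 / 2)" if z: "z \<in> \<Theta>" for z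
  proof -
    have "2 * \<eta> * (\<Sum>i<m. measure_pmf.expectation (It i z) F - F z)
       + measure_pmf.expectation (It m z) (\<lambda>w. (norm (w - z))\<^sup>2) \<le> (norm (z - z))\<^sup>2 + m * (\<eta>\<^sup>2 * G\<^sup>2)"
      by (rule multi_step[OF z])
    moreover have "measure_pmf.expectation (It m z) (\<lambda>w. (norm (w - z))\<^sup>2) \<ge> 0"
      by (intro integral_nonneg_AE) auto
    moreover have "(norm (z - z))\<^sup>2 = 0" by simp
    moreover have "m * (\<eta>\<^sup>2 * G\<^sup>2) = 2 * \<eta> * (m * (\<eta> * G\<^sup>2 / 2))" by (simp add: power2_eq_square)
    ultimately have "2 * \<eta> * (\<Sum>i<m. measure_pmf.expectation (It i z) F - F z) \<le> 2 * \<eta> * (m * (\<eta> * G\<^sup>2 / 2))"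
      by linarith
    then show ?thesis using eta_pos by simp
  qed
  have "(\<Sum>i<m. measure_pmf.expectation (It (s + i) \<theta>1) F - measure_pmf.expectation (It s \<theta>1) F)
     = measure_pmf.expectation (It s \<theta>1) (\<lambda>z. \<Sum>i<m. measure_pmf.expectation (It i z) F - F z)"
    by (simp add: E_It_add int_It integral_sum integral_diff)
  also have "\<dots> \<le> measure_pmf.expectation (It s \<theta>1) (\<lambda>z. m * (\<eta> * G\<^sup>2 / 2))"
    using set_It(2)[OF th1, of s] pt
    by (intro integral_mono_AE int_It AE_pmfI) auto
  also have "\<dots> = m * (\<eta> * G\<^sup>2 / 2)" by simp
  finally show ?thesis .
qed

lemma D_bound:
  assumes eta_pos: "\<eta> > 0" and u: "u \<in> \<Theta>"
  shows "(\<Sum>i<m. measure_pmf.expectation (It i \<theta>) F - F u) \<le> (norm (\<theta> - u))\<^sup>2 / (2 * \<eta>) + m * (\<eta> * G\<^sup>2 / 2)"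
proof -
  have "2 * \<eta> * (\<Sum>i<m. measure_pmf.expectation (It i \<theta>) F - F u)
     + measure_pmf.expectation (It m \<theta>) (\<lambda>w. (norm (w - u))\<^sup>2) \<le> (norm (\<theta> - u))\<^sup>2 + m * (\<eta>\<^sup>2 * G\<^sup>2)"
    by (rule multi_step[OF u])
  moreover have "measure_pmf.expectation (It m \<theta>) (\<lambda>w. (norm (w - u))\<^sup>2) \<ge> 0"
    by (intro integral_nonneg_AE) auto
  ultimately have "2 * \<eta> * (\<Sum>i<m. measure_pmf.expectation (It i \<theta>) F - F u) \<le> (norm (\<theta> - u))\<^sup>2 + m * (\<eta>\<^sup>2 * G\<^sup>2)"
    by linarith
  then show ?thesis using eta_pos by (simp add: field_simps power2_eq_square)
qed

lemma final_bound:
  assumes eta_pos: "\<eta> > 0" and th1: "\<theta>1 \<in> \<Theta>" and xs: "xs \<in> \<Theta>"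
    and min: "\<And>\<theta>. \<theta> \<in> \<Theta> \<Longrightarrow> F xs \<le> F \<theta>"
  shows "measure_pmf.expectation (It N \<theta>1) (\<lambda>\<theta>. F \<theta> - F xs)
           \<le> (norm (\<theta>1 - xs))\<^sup>2 / (2 * \<eta> * Suc N) + (\<eta> * G\<^sup>2 / 2) * (1 + harm N)"
    and "measure_pmf.expectation (It N \<theta>1) (\<lambda>\<theta>. F \<theta> - F xs) \<ge> 0"
proof -
  define v where "v i = measure_pmf.expectation (It i \<theta>1) F" for i
  define c where "c = \<eta> * G\<^sup>2 / 2"
  have E: "measure_pmf.expectation (It N \<theta>1) (\<lambda>\<theta>. F \<theta> - F xs) = v N - F xs"
    unfolding v_def by (simp add: int_It integral_diff)
  have L1: "v N \<le> (\<Sum>i<Suc N. v (N - N + i)) / Suc N + c * harm N"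
    by (rule last_iter_comb) (use C_bound[OF eta_pos th1] in \<open>auto simp: v_def c_def\<close>)
  have "(\<Sum>i<Suc N. v i - F xs) \<le> (norm (\<theta>1 - xs))\<^sup>2 / (2 * \<eta>) + Suc N * c"
    unfolding v_def c_def by (rule D_bound[OF eta_pos xs])
  then have "(\<Sum>i<Suc N. v i) \<le> Suc N * F xs + (norm (\<theta>1 - xs))\<^sup>2 / (2 * \<eta>) + Suc N * c"
    by (simp add: sum_subtractf)
  then have "(\<Sum>i<Suc N. v i) / Suc N \<le> (Suc N * F xs + (norm (\<theta>1 - xs))\<^sup>2 / (2 * \<eta>) + Suc N * c) / Suc N"
    by (intro divide_right_mono) auto
  also have "\<dots> = F xs + (norm (\<theta>1 - xs))\<^sup>2 / (2 * \<eta> * Suc N) + c"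
    using eta_pos by (simp add: field_simps del: of_nat_Suc)
  finally have L2: "(\<Sum>i<Suc N. v i) / Suc N \<le> F xs + (norm (\<theta>1 - xs))\<^sup>2 / (2 * \<eta> * Suc N) + c" .
  have L1': "v N \<le> (\<Sum>i<Suc N. v i) / Suc N + c * harm N" using L1 by simp
  have "v N - F xs \<le> (norm (\<theta>1 - xs))\<^sup>2 / (2 * \<eta> * Suc N) + c * (1 + harm N)"
    using L1' L2 unfolding distrib_left mult_1_right by linarith
  then show "measure_pmf.expectation (It N \<theta>1) (\<lambda>\<theta>. F \<theta> - F xs)
           \<le> (norm (\<theta>1 - xs))\<^sup>2 / (2 * \<eta> * Suc N) + (\<eta> * G\<^sup>2 / 2) * (1 + harm N)"
    unfolding E c_def .
  show "measure_pmf.expectation (It N \<theta>1) (\<lambda>\<theta>. F \<theta> - F xs) \<ge> 0"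
    using set_It(2)[OF th1, of N] min by (intro integral_nonneg_AE AE_pmfI) auto
qed

lemma final_explicit:
  assumes eta_pos: "\<eta> > 0" and th1: "\<theta>1 \<in> \<Theta>" and xs: "xs \<in> \<Theta>"
    and min: "\<forall>\<theta>'\<in>\<Theta>. lam * f_DPO \<phi> \<theta>ref \<beta> D1 xs + (1 - lam) * f_SFT \<phi> D2 xs
         \<le> lam * f_DPO \<phi> \<theta>ref \<beta> D1 \<theta>' + (1 - lam) * f_SFT \<phi> D2 \<theta>'"
  shows "measure_pmf.expectation (It N \<theta>1) (\<lambda>\<theta>. lam * f_DPO \<phi> \<theta>ref \<beta> D1 \<theta> + (1 - lam) * f_SFT \<phi> D2 \<theta>
               - (lam * f_DPO \<phi> \<theta>ref \<beta> D1 xs + (1 - lam) * f_SFT \<phi> D2 xs))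
           \<le> (norm (\<theta>1 - xs))\<^sup>2 / (2 * \<eta> * Suc N) + (\<eta> * G\<^sup>2 / 2) * (1 + harm N)"
    and "measure_pmf.expectation (It N \<theta>1) (\<lambda>\<theta>. lam * f_DPO \<phi> \<theta>ref \<beta> D1 \<theta> + (1 - lam) * f_SFT \<phi> D2 \<theta>
               - (lam * f_DPO \<phi> \<theta>ref \<beta> D1 xs + (1 - lam) * f_SFT \<phi> D2 xs)) \<ge> 0"
  using final_bound[OF eta_pos th1 xs, of N] min unfolding F_def by auto

end



theorem theorem4p1:
  fixes \<phi> :: "'y::finite \<Rightarrow> 'x \<Rightarrow> 'a::euclidean_space"
    and \<theta>ref \<theta>1 :: 'a and \<Theta> :: "'a set"
    and D1 :: "('x \<times> 'y \<times> 'y) list" and D2 :: "('x \<times> 'y) list"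
    and \<beta> \<alpha>0 \<Phi> lam :: real
  assumes "\<Theta> \<noteq> {}" and "closed \<Theta>" and "convex \<Theta>"
    and "\<theta>1 \<in> \<Theta>"
    and "D1 \<noteq> []" and "D2 \<noteq> []"
    and "\<beta> > 0" and "\<alpha>0 > 0"
    and "\<Phi> > 0" and "\<forall>x y. norm (\<phi> y x) \<le> \<Phi>"
    and "0 \<le> lam" and "lam \<le> 1"
    and "\<exists>\<theta>\<in>\<Theta>. \<forall>\<theta>'\<in>\<Theta>.
           lam * f_DPO \<phi> \<theta>ref \<beta> D1 \<theta> + (1 - lam) * f_SFT \<phi> D2 \<theta>
         \<le> lam * f_DPO \<phi> \<theta>ref \<beta> D1 \<theta>' + (1 - lam) * f_SFT \<phi> D2 \<theta>'"
  shows "(\<lambda>T. measure_pmf.expectation (alright_output \<phi> \<theta>ref \<beta> \<Theta> D1 D2 lam \<alpha>0 \<theta>1 T)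
               (\<lambda>\<theta>. lam * f_DPO \<phi> \<theta>ref \<beta> D1 \<theta> + (1 - lam) * f_SFT \<phi> D2 \<theta>
                   - (INF \<theta>'\<in>\<Theta>. lam * f_DPO \<phi> \<theta>ref \<beta> D1 \<theta>' + (1 - lam) * f_SFT \<phi> D2 \<theta>')))
         \<in> O(\<lambda>T. ln (real T) / sqrt (real T))"
proof -
  let ?F = "\<lambda>\<theta>. lam * f_DPO \<phi> \<theta>ref \<beta> D1 \<theta> + (1 - lam) * f_SFT \<phi> D2 \<theta>"
  obtain xs where xs: "xs \<in> \<Theta>" and min: "\<forall>\<theta>'\<in>\<Theta>. ?F xs \<le> ?F \<theta>'"
    using assms(13) by blast
  define G where "G = 2 * \<Phi> * (\<beta> + 1)"
  have GD: "norm (g_DPO \<phi> \<theta>ref \<beta> \<theta> x yw yl) \<le> G" for \<theta> x yw yl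
    using norm_g_DPO[OF assms(10,7), of \<theta>ref \<theta> x yw yl] assms(9) unfolding G_def
    by (simp add: algebra_simps)
  have GS: "norm (g_SFT \<phi> \<theta> x y) \<le> G" for \<theta> x y
    using norm_g_SFT[OF assms(10), of \<theta> x y] mult_pos_pos[OF assms(9) assms(7)] unfolding G_def
    by (simp add: algebra_simps)
  have INF: "(INF \<theta>'\<in>\<Theta>. ?F \<theta>') = ?F xs"
    using xs min by (intro cInf_eq_minimum) auto
  define R where "R = norm (\<theta>1 - xs)"
  define C where "C = R\<^sup>2 / (2 * \<alpha>0) + 3 * \<alpha>0 * G\<^sup>2 / 2"
  have bound: "norm (measure_pmf.expectation (alright_output \<phi> \<theta>ref \<beta> \<Theta> D1 D2 lam \<alpha>0 \<theta>1 T)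
               (\<lambda>\<theta>. ?F \<theta> - (INF \<theta>'\<in>\<Theta>. ?F \<theta>'))) \<le> C * norm (ln (real T) / sqrt (real T))"
    if T: "T \<ge> 3" for T
  proof -
    define t where "t = real T"
    define s where "s = sqrt t"
    define \<eta> where "\<eta> = \<alpha>0 / s"
    have t3: "t \<ge> 3" using T unfolding t_def by simp
    have s: "s > 0" "s * s = t" unfolding s_def using t3 by auto
    have eta: "\<eta> > 0" unfolding \<eta>_def using s assms(8) by simp
    have lnt: "ln t \<ge> 1" using t3 exp_le by (subst ln_ge_iff) auto
    have SucT: "real (Suc (T - 1)) = t" using T unfolding t_def by simp
    let ?E = "measure_pmf.expectation (alright_iter \<phi> \<theta>ref \<beta> \<Theta> D1 D2 lam \<eta> (T - 1) \<theta>1)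
               (\<lambda>\<theta>. ?F \<theta> - ?F xs)"
    have out: "alright_output \<phi> \<theta>ref \<beta> \<Theta> D1 D2 lam \<alpha>0 \<theta>1 T = alright_iter \<phi> \<theta>ref \<beta> \<Theta> D1 D2 lam \<eta> (T - 1) \<theta>1"
      unfolding alright_output_def \<eta>_def s_def t_def ..
    have up: "?E \<le> R\<^sup>2 / (2 * \<eta> * t) + (\<eta> * G\<^sup>2 / 2) * (1 + harm (T - 1))"
      using final_explicit(1)[OF assms(1,2,3,5,6,11,12) less_imp_le[OF eta] GD GS eta assms(4) xs min, of "T - 1"]
      unfolding R_def SucT .
    have lo: "?E \<ge> 0"
      using final_explicit(2)[OF assms(1,2,3,5,6,11,12) less_imp_le[OF eta] GD GS eta assms(4) xs min, of "T - 1"] .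
    have "harm (T - 1) \<le> 1 + ln (real (T - 1))" using T by (intro harm_le_ln) auto
    also have "ln (real (T - 1)) \<le> ln t" using T unfolding t_def by (subst ln_le_cancel_iff) auto
    finally have h: "1 + harm (T - 1) \<le> 3 * ln t" using lnt by linarith
    have "?E \<le> R\<^sup>2 / (2 * \<eta> * t) + (\<eta> * G\<^sup>2 / 2) * (3 * ln t)"
      using up h eta by (smt (verit) mult_left_mono zero_le_power2 divide_nonneg_pos mult_nonneg_nonneg)
    also have "R\<^sup>2 / (2 * \<eta> * t) = R\<^sup>2 / (2 * \<alpha>0) * (1 / s)"
      unfolding \<eta>_def using s assms(8) by (simp add: field_simps s(2)[symmetric])
    also have "\<dots> \<le> R\<^sup>2 / (2 * \<alpha>0) * (ln t / s)"
      using s lnt assms(8) by (intro mult_left_mono divide_right_mono) auto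
    also have "(\<eta> * G\<^sup>2 / 2) * (3 * ln t) = 3 * \<alpha>0 * G\<^sup>2 / 2 * (ln t / s)"
      unfolding \<eta>_def by (simp add: field_simps)
    finally have "?E \<le> C * (ln t / s)" unfolding C_def by (simp add: algebra_simps)
    moreover have "norm (ln t / s) = ln t / s" using lnt s by simp
    ultimately show ?thesis using lo unfolding out INF t_def[symmetric] s_def[symmetric] by simp
  qed
  show ?thesis
    by (intro bigoI[where c = C]) (use bound in \<open>auto simp: eventually_at_top_linorder intro!: exI[of _ 3]\<close>)
qed

end
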